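(* Let $H=(V,E,C,\ell)$ be an edge-colored hypergraph with $k=|C|$ colors and weights $w_e\ge0$, and let $x$ be an optimal solution of the \textsc{MinECC} LP relaxation, where if $k=2$ we additionally assume $x$ is a vertex (extreme point) of the feasible polytope. Let $Y$ be the output of GenColorRound applied to $x$ with interval $I=(\frac12,\frac34)$. Then $\mathbb E\left[\sum_{e\in E} w_e \mathbb 1[e\in\mathcal M_Y]\right] \le 2\left(1-\frac1k\right)\cdot \mathrm{OPT}$, where $\mathrm{OPT}$ is the optimal \textsc{MinECC} value. In fact, for $k\ge 3$, for every feasible LP solution $x$ and every edge $e\in E$, $\Pr[e\in\mathcal M_Y]\le 2\left(1-\frac1k\right)x_e$.
   Context: An edge-colored hypergraph is $H=(V,E,C,\ell)$ with node set $V$, a multiset $E$ of nonempty subsets of $V$, colors $C=[k]$, $\ell\colon E\to C$, weights $w_e\ge 0$. A node coloring $Y\colon V\to C$ makes a mistake at $e$ ($e\in\mathcal M_Y$) if some $v\in e$ has $Y[v]\ne\ell(e)$; \textsc{MinECC} minimizes $\sum_e w_e\mathbb 1[e\in\mathcal M_Y]$. The \textsc{MinECC} LP relaxation: minimize $\sum_e w_e x_e$ subject to $\sum_{i=1}^k x_v^i=k-1$ for all $v\in V$; $x_e\ge x_v^{\ell(e)}$ for all $e\in E$, $v\in e$; $0\le x_v^i\le1$; $0\le x_e\le 1$. GenColorRound with interval $I\subseteq[0,1]$, applied to a feasible LP solution $x$: draw $\rho$ uniformly at random from $I$ and, independently, a uniformly random permutation $\pi$ of $[k]$; let $S_i=\{v\in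 V: x_v^i<\rho\}$ (we say color $i$ wants $v$ if $x_v^i<\rho$); for each $v\in\bigcup_i S_i$ set $Y[v]=\pi(j)$ where $j$ is the largest index in $\{1,\dots,k\}$ with $v\in S_{\pi(j)}$ (i.e., colors later in $\pi$ have higher priority); nodes in no $S_i$ receive an arbitrary color. *)

theory Defs
  imports "HOL-Probability.Probability" "HOL-Combinatorics.Permutations"
begin

text \<open>Edge-colored hypergraph: node set V, edges indexed by a finite set Ed (so E may be a
multiset), ed e is the node set of edge e, lab e its color in {1..k}, w e its weight.
An LP solution is a pair (xv, xe) with xv v i = x_v^i and xe e = x_e.\<close>

definition hypergraph_ok ::
  "'v set \<Rightarrow> 'e set \<Rightarrow> ('e \<Rightarrow> 'v set) \<Rightarrow> ('e \<Rightarrow> nat) \<Rightarrow> nat \<Rightarrow> ('e \<Rightarrow> real) \<Rightarrow> bool" where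
  "hypergraph_ok V Ed ed lab k w \<longleftrightarrow> finite V \<and> finite Ed \<and>
     (\<forall>e\<in>Ed. ed e \<noteq> {} \<and> ed e \<subseteq> V \<and> lab e \<in> {1..k} \<and> w e \<ge> 0)"

definition lp_feasible ::
  "'v set \<Rightarrow> 'e set \<Rightarrow> ('e \<Rightarrow> 'v set) \<Rightarrow> ('e \<Rightarrow> nat) \<Rightarrow> nat
     \<Rightarrow> ('v \<Rightarrow> nat \<Rightarrow> real) \<Rightarrow> ('e \<Rightarrow> real) \<Rightarrow> bool" where
  "lp_feasible V Ed ed lab k xv xe \<longleftrightarrow>
     (\<forall>v\<in>V. (\<Sum>i=1..k. xv v i) = real k - 1) \<and>
     (\<forall>e\<in>Ed. \<forall>v\<in>ed e. xe e \<ge> xv v (lab e)) \<and>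
     (\<forall>v\<in>V. \<forall>i\<in>{1..k}. 0 \<le> xv v i \<and> xv v i \<le> 1) \<and>
     (\<forall>e\<in>Ed. 0 \<le> xe e \<and> xe e \<le> 1)"

definition lp_obj :: "'e set \<Rightarrow> ('e \<Rightarrow> real) \<Rightarrow> ('e \<Rightarrow> real) \<Rightarrow> real" where
  "lp_obj Ed w xe = (\<Sum>e\<in>Ed. w e * xe e)"

definition lp_optimal ::
  "'v set \<Rightarrow> 'e set \<Rightarrow> ('e \<Rightarrow> 'v set) \<Rightarrow> ('e \<Rightarrow> nat) \<Rightarrow> nat \<Rightarrow> ('e \<Rightarrow> real)
     \<Rightarrow> ('v \<Rightarrow> nat \<Rightarrow> real) \<Rightarrow> ('e \<Rightarrow> real) \<Rightarrow> bool" where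
  "lp_optimal V Ed ed lab k w xv xe \<longleftrightarrow> lp_feasible V Ed ed lab k xv xe \<and>
     (\<forall>yv ye. lp_feasible V Ed ed lab k yv ye \<longrightarrow> lp_obj Ed w xe \<le> lp_obj Ed w ye)"

definition lp_vertex ::
  "'v set \<Rightarrow> 'e set \<Rightarrow> ('e \<Rightarrow> 'v set) \<Rightarrow> ('e \<Rightarrow> nat) \<Rightarrow> nat
     \<Rightarrow> ('v \<Rightarrow> nat \<Rightarrow> real) \<Rightarrow> ('e \<Rightarrow> real) \<Rightarrow> bool" where
  "lp_vertex V Ed ed lab k xv xe \<longleftrightarrow> lp_feasible V Ed ed lab k xv xe \<and>
     (\<forall>yv ye zv ze t. lp_feasible V Ed ed lab k yv ye \<and> lp_feasible V Ed ed lab k zv ze \<and>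
        0 < t \<and> t < 1 \<and>
        (\<forall>v\<in>V. \<forall>i\<in>{1..k}. xv v i = t * yv v i + (1 - t) * zv v i) \<and>
        (\<forall>e\<in>Ed. xe e = t * ye e + (1 - t) * ze e)
      \<longrightarrow> (\<forall>v\<in>V. \<forall>i\<in>{1..k}. yv v i = zv v i) \<and> (\<forall>e\<in>Ed. ye e = ze e))"

definition mistake :: "('e \<Rightarrow> 'v set) \<Rightarrow> ('e \<Rightarrow> nat) \<Rightarrow> ('v \<Rightarrow> nat) \<Rightarrow> 'e \<Rightarrow> bool" where
  "mistake ed lab Y e \<longleftrightarrow> (\<exists>v\<in>ed e. Y v \<noteq> lab e)"

definition ecc_cost ::
  "'e set \<Rightarrow> ('e \<Rightarrow> 'v set) \<Rightarrow> ('e \<Rightarrow> nat) \<Rightarrow> ('e \<Rightarrow> real) \<Rightarrow> ('v \<Rightarrow> nat) \<Rightarrow> real" where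
  "ecc_cost Ed ed lab w Y = (\<Sum>e\<in>Ed. w e * (if mistake ed lab Y e then 1 else 0))"

definition ecc_opt ::
  "'v set \<Rightarrow> 'e set \<Rightarrow> ('e \<Rightarrow> 'v set) \<Rightarrow> ('e \<Rightarrow> nat) \<Rightarrow> nat \<Rightarrow> ('e \<Rightarrow> real) \<Rightarrow> real" where
  "ecc_opt V Ed ed lab k w = Min (ecc_cost Ed ed lab w ` (V \<rightarrow>\<^sub>E {1..k}))"

definition gcr_color ::
  "nat \<Rightarrow> ('v \<Rightarrow> nat \<Rightarrow> real) \<Rightarrow> (real \<Rightarrow> (nat \<Rightarrow> nat) \<Rightarrow> 'v \<Rightarrow> nat)
     \<Rightarrow> real \<Rightarrow> (nat \<Rightarrow> nat) \<Rightarrow> 'v \<Rightarrow> nat" where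
  "gcr_color k xv arb \<rho> \<pi> v =
     (if \<exists>i\<in>{1..k}. xv v i < \<rho> then \<pi> (Max {j\<in>{1..k}. xv v (\<pi> j) < \<rho>})
      else arb \<rho> \<pi> v)"

definition gcr_expect :: "nat \<Rightarrow> real set \<Rightarrow> (real \<Rightarrow> (nat \<Rightarrow> nat) \<Rightarrow> real) \<Rightarrow> real" where
  "gcr_expect k I f =
     measure_pmf.expectation (pmf_of_set {\<pi>. \<pi> permutes {1..k}})
       (\<lambda>\<pi>. integral\<^sup>L (uniform_measure lborel I) (\<lambda>\<rho>. f \<rho> \<pi>))"

end

theory Submission
  imports Defs
begin


abbreviation "UI \<equiv> {1/2<..<3/4::real}"
abbreviation "UU \<equiv> uniform_measure lborel UI"

lemma UI_meas: "emeasure lborel UI = ennreal (1/4)"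
  by simp

lemma UU_prob: "prob_space UU"
  by (rule prob_space_uniform_measure) (simp_all)

lemma UU_measure: "B \<in> sets borel \<Longrightarrow> measure UU B = 4 * measure lborel (UI \<inter> B)"
  by (subst measure_uniform_measure) (simp_all)

lemma UU_int_le:
  fixes f h :: "real \<Rightarrow> real"
  assumes "\<And>\<rho>. \<rho> \<in> UI \<Longrightarrow> f \<rho> \<le> h \<rho>" "integrable UU h" "\<And>\<rho>. \<rho> \<in> UI \<Longrightarrow> 0 \<le> h \<rho>"
  shows "integral\<^sup>L UU f \<le> integral\<^sup>L UU h"
proof (cases "integrable UU f")
  case True
  have ae: "AE \<rho> in UU. \<rho> \<in> UI"
    by (rule AE_uniform_measureI) auto
  show ?thesis
    by (rule integral_mono_AE[OF True assms(2)]) (use ae assms(1) in auto)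
next
  case False
  have ae: "AE \<rho> in UU. 0 \<le> h \<rho>"
    by (rule AE_uniform_measureI) (use assms(3) in auto)
  show ?thesis using False integral_nonneg_AE[OF ae] by (simp add: not_integrable_integral_eq)
qed

lemma UU_indicator_int: "B \<in> sets borel \<Longrightarrow> integrable UU (indicator B :: real \<Rightarrow> real)"
proof -
  interpret prob_space UU by (rule UU_prob)
  assume "B \<in> sets borel"
  then show ?thesis by (intro integrable_real_indicator) (auto simp: emeasure_eq_measure)
qed



lemma gcr_key:
  assumes p: "\<pi> permutes {1..k}" and c: "c \<in> {1..k}"
    and ne: "gcr_color k yv arb \<rho> \<pi> v \<noteq> c"
  shows "\<rho> \<le> yv v c \<or> (\<pi> k \<noteq> c \<and> (\<exists>i\<in>{1..k}. i \<noteq> c \<and> yv v i < \<rho>))"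
proof (cases "\<rho> \<le> yv v c")
  case True then show ?thesis by simp
next
  case False
  hence lt: "yv v c < \<rho>" by simp
  hence ex: "\<exists>i\<in>{1..k}. yv v i < \<rho>" using c by blast
  define J where "J = {j\<in>{1..k}. yv v (\<pi> j) < \<rho>}"
  have Y: "gcr_color k yv arb \<rho> \<pi> v = \<pi> (Max J)"
    using ex unfolding gcr_color_def J_def by simp
  have "inv \<pi> c \<in> {1..k}" using permutes_in_image[OF permutes_inv[OF p], of c] c by blast
  moreover have "\<pi> (inv \<pi> c) = c" using p by (meson permutes_inverses(1))
  ultimately have "inv \<pi> c \<in> J" using lt unfolding J_def by simp
  hence Jne: "J \<noteq> {}" by auto
  have Jfin: "finite J" unfolding J_def by simp
  have MJ: "Max J \<in> J" using Max_in[OF Jfin Jne] .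
  hence MJk: "Max J \<in> {1..k}" and MJy: "yv v (\<pi> (Max J)) < \<rho>" unfolding J_def by auto
  have ic: "\<pi> (Max J) \<in> {1..k}" using MJk permutes_in_image[OF p] by blast
  have "\<pi> (Max J) \<noteq> c" using ne Y by simp
  moreover have "\<pi> k \<noteq> c"
  proof
    assume pk: "\<pi> k = c"
    have "k \<in> J" unfolding J_def using pk lt c by auto
    hence "k \<le> Max J" using Jfin by simp
    hence "Max J = k" using MJk by simp
    thus False using pk \<open>\<pi> (Max J) \<noteq> c\<close> by simp
  qed
  ultimately show ?thesis using ic MJy by blast
qed

lemma perm_count:
  assumes c: "c \<in> {1..k}"
  shows "real (card {\<pi>. \<pi> permutes {1..k} \<and> \<pi> k = c}) * real k = real (card {\<pi>. \<pi> permutes {1..k}})"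
proof -
  let ?S = "{\<pi>. \<pi> permutes {1..k}}"
  let ?N = "\<lambda>i. {\<pi>. \<pi> permutes {1..k} \<and> \<pi> k = i}"
  have k1: "k \<in> {1..k}" using c by auto
  have eq: "card (?N i) = card (?N c)" if i: "i \<in> {1..k}" for i
  proof -
    let ?t = "Transposition.transpose i c"
    have tp: "?t permutes {1..k}" using i c by (simp add: permutes_swap_id)
    have "bij_betw (\<lambda>p. ?t \<circ> p) (?N i) (?N c)"
    proof (rule bij_betw_byWitness[where f'="\<lambda>p. ?t \<circ> p"])
      show "\<forall>a\<in>?N i. ?t \<circ> (?t \<circ> a) = a" by (auto simp: fun_eq_iff)
      show "\<forall>a\<in>?N c. ?t \<circ> (?t \<circ> a) = a" by (auto simp: fun_eq_iff)
      show "(\<lambda>p. ?t \<circ> p) ` ?N i \<subseteq> ?N c" using tp by (auto intro: permutes_compose)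
      show "(\<lambda>p. ?t \<circ> p) ` ?N c \<subseteq> ?N i" using tp by (auto intro: permutes_compose)
    qed
    thus ?thesis by (rule bij_betw_same_card)
  qed
  have fin: "finite ?S" by (rule finite_permutations) simp
  have "?S = (\<Union>i\<in>{1..k}. ?N i)"
  proof (intro equalityI subsetI)
    fix x assume "x \<in> ?S"
    then have "x k \<in> {1..k}" using k1 permutes_in_image by (metis mem_Collect_eq)
    then show "x \<in> (\<Union>i\<in>{1..k}. ?N i)" using \<open>x \<in> ?S\<close> by blast
  qed auto
  hence "card ?S = (\<Sum>i\<in>{1..k}. card (?N i))"
    using fin by (simp only:) (rule card_UN_disjoint, auto intro: finite_subset)
  also have "\<dots> = (\<Sum>i\<in>{1..k}. card (?N c))" using eq by simp
  also have "\<dots> = k * card (?N c)" by simp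
  finally show ?thesis by (simp add: mult.commute)
qed



lemma A_val: fixes m :: real shows
  "measure UU {..m} = (if m \<le> 1/2 then 0 else if m < 3/4 then 4 * (m - 1/2) else 1)"
proof -
  have "measure UU {..m} = 4 * measure lborel (UI \<inter> {..m})" by (rule UU_measure) simp
  also have "\<dots> = (if m \<le> 1/2 then 0 else if m < 3/4 then 4 * (m - 1/2) else 1)"
  proof -
    consider "m \<le> 1/2" | "1/2 < m" "m < 3/4" | "3/4 \<le> m" by linarith
    then show ?thesis
    proof cases
      case 1 then have "UI \<inter> {..m} = {}" by auto
      then show ?thesis using 1 by simp
    next
      case 2 then have "UI \<inter> {..m} = {1/2<..m}" by auto
      then show ?thesis using 2 by simp
    next
      case 3 then have "UI \<inter> {..m} = UI" by auto
      then show ?thesis using 3 by simp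
    qed
  qed
  finally show ?thesis .
qed

lemma B_val: fixes r :: real assumes "1/2 \<le> r" shows
  "measure UU {r<..} = (if r < 3/4 then 4 * (3/4 - r) else 0)"
proof -
  have "measure UU {r<..} = 4 * measure lborel (UI \<inter> {r<..})" by (rule UU_measure) simp
  also have "\<dots> = (if r < 3/4 then 4 * (3/4 - r) else 0)"
  proof (cases "r < 3/4")
    case True then have "UI \<inter> {r<..} = {r<..<3/4}" using assms by auto
    then show ?thesis using True by simp
  next
    case False then have "UI \<inter> {r<..} = {}" by auto
    then show ?thesis using False by simp
  qed
  finally show ?thesis .
qed

lemma arith_AB:
  fixes m a :: real assumes m: "0 \<le> m" and a1: "2/3 \<le> a" and a2: "a \<le> 1"
  shows "(if m \<le> 1/2 then 0 else if m < 3/4 then 4*(m-1/2) else 1) + a * (if max m (1-m) < 3/4 then 4*(3/4 - max m (1-m)) else 0) \<le> 2*a*m"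
proof -
  consider "m \<le> 1/4" | "1/4 < m" "m \<le> 1/2" | "1/2 < m" "m < 3/4" | "3/4 \<le> m" by linarith
  then show ?thesis
  proof cases
    case 1
    then have "\<not> max m (1-m) < 3/4" unfolding max_def by auto
    moreover have "0 \<le> 2*a*m" using m a1 by simp
    ultimately show ?thesis using 1 by simp
  next
    case 2
    then have mx: "max m (1-m) = 1 - m" unfolding max_def by auto
    have "a * (4*m - 1) \<le> a * (2*m)" using 2 a1 by (intro mult_left_mono) auto
    then show ?thesis using 2 unfolding mx by (simp add: algebra_simps)
  next
    case 3
    then have mx: "max m (1-m) = m" unfolding max_def by auto
    have "(6*a - 4)*(m - 1/2) \<ge> 0" using 3 a1 by (intro mult_nonneg_nonneg) auto
    then show ?thesis using 3 unfolding mx by (simp add: algebra_simps)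
  next
    case 4
    then have mx: "max m (1-m) = m" unfolding max_def by auto
    have "(a - 2/3)*(m - 3/4) \<ge> 0" using 4 a1 by (intro mult_nonneg_nonneg) auto
    then show ?thesis using 4 a1 unfolding mx by (simp add: algebra_simps)
  qed
qed

lemma AB_bound:
  fixes m :: real and k :: nat
  assumes m: "0 \<le> m" and k: "3 \<le> k"
  shows "measure UU {..m} + (1 - 1/real k) * measure UU {max m (1-m)<..} \<le> 2 * (1 - 1/real k) * m"
proof -
  have a1: "2/3 \<le> 1 - 1/real k" using k by (simp add: field_simps)
  have a2: "1 - 1/real k \<le> 1" by simp
  have r: "1/2 \<le> max m (1-m)" unfolding max_def by auto
  have A: "measure UU {..m} = (if m \<le> 1/2 then 0 else if m < 3/4 then 4 * (m - 1/2) else 1)" by (rule A_val)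
  have B: "measure UU {max m (1-m)<..} = (if max m (1-m) < 3/4 then 4 * (3/4 - max m (1-m)) else 0)" by (rule B_val[OF r])
  show ?thesis unfolding A B by (rule arith_AB[OF m a1 a2])
qed

definition hb :: "real \<Rightarrow> real \<Rightarrow> nat \<Rightarrow> nat \<Rightarrow> real \<Rightarrow> (nat \<Rightarrow> nat) \<Rightarrow> real" where
  "hb m r k c \<rho> \<pi> = indicator {..m} \<rho> + (if \<pi> k \<noteq> c then 1 else 0) * indicator {r<..} \<rho>"

lemma hb_int: "integrable UU (\<lambda>\<rho>. hb m r k c \<rho> \<pi>)"
proof -
  have 1: "integrable UU (indicator {..m} :: real \<Rightarrow> real)" by (rule UU_indicator_int) simp
  have 2: "integrable UU (indicator {r<..} :: real \<Rightarrow> real)" by (rule UU_indicator_int) simp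
  have 3: "integrable UU (\<lambda>\<rho>. (if \<pi> k \<noteq> c then 1 else 0) * indicator {r<..} \<rho> :: real)"
    using 2 by simp
  show ?thesis unfolding hb_def using Bochner_Integration.integrable_add[OF 1 3] by simp
qed

lemma hb_integral: "integral\<^sup>L UU (\<lambda>\<rho>. hb m r k c \<rho> \<pi>) =
   measure UU {..m} + (if \<pi> k \<noteq> c then 1 else 0) * measure UU {r<..}"
proof -
  have 1: "integrable UU (indicator {..m} :: real \<Rightarrow> real)" by (rule UU_indicator_int) simp
  have 2: "integrable UU (indicator {r<..} :: real \<Rightarrow> real)" by (rule UU_indicator_int) simp
  have 3: "integrable UU (\<lambda>\<rho>. (if \<pi> k \<noteq> c then 1 else 0) * indicator {r<..} \<rho> :: real)"
    using 2 by simp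
  have "integral\<^sup>L UU (\<lambda>\<rho>. hb m r k c \<rho> \<pi>) = integral\<^sup>L UU (indicator {..m}) +
     integral\<^sup>L UU (\<lambda>\<rho>. (if \<pi> k \<noteq> c then 1 else 0) * indicator {r<..} \<rho> :: real)"
    unfolding hb_def by (rule Bochner_Integration.integral_add[OF 1 3])
  then show ?thesis by simp
qed

lemma hb_nonneg: "0 \<le> hb m r k c \<rho> \<pi>"
  unfolding hb_def by simp

lemma perms_fin: "finite {\<pi>. \<pi> permutes {1..(k::nat)}}" by (rule finite_permutations) simp
lemma perms_ne: "{\<pi>. \<pi> permutes {1..(k::nat)}} \<noteq> {}" using permutes_id by blast

lemma gcr_expect_eq: "gcr_expect k UI f =
   (\<Sum>\<pi>\<in>{\<pi>. \<pi> permutes {1..k}}. integral\<^sup>L UU (\<lambda>\<rho>. f \<rho> \<pi>)) / card {\<pi>. \<pi> permutes {1..k}}"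
  unfolding gcr_expect_def using perms_fin perms_ne by (simp add: integral_pmf_of_set)

lemma expect_mono:
  assumes "\<And>\<pi>. \<pi> permutes {1..k} \<Longrightarrow> integral\<^sup>L UU (\<lambda>\<rho>. f \<rho> \<pi>) \<le> integral\<^sup>L UU (\<lambda>\<rho>. g \<rho> \<pi>)"
  shows "gcr_expect k UI f \<le> gcr_expect k UI g"
  unfolding gcr_expect_eq
  by (intro divide_right_mono sum_mono) (use assms in auto)

lemma expect_const:
  assumes "\<And>\<pi> \<rho>. \<pi> permutes {1..k} \<Longrightarrow> \<rho> \<in> UI \<Longrightarrow> f \<rho> \<pi> \<le> c" and c: "0 \<le> c"
  shows "gcr_expect k UI f \<le> c"
proof -
  interpret prob_space UU by (rule UU_prob)
  have "gcr_expect k UI f \<le> gcr_expect k UI (\<lambda>_ _. c)"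
    by (rule expect_mono, rule UU_int_le) (use assms in auto)
  also have "\<dots> = c" unfolding gcr_expect_eq using perms_fin perms_ne by simp
  finally show ?thesis .
qed

lemma expect_hb:
  assumes c: "c \<in> {1..k}"
  shows "gcr_expect k UI (hb m r k c) = measure UU {..m} + (1 - 1/real k) * measure UU {r<..}"
proof -
  let ?S = "{\<pi>. \<pi> permutes {1..k}}"
  let ?N = "{\<pi>. \<pi> permutes {1..k} \<and> \<pi> k = c}"
  define A where "A = measure UU {..m}"
  define B where "B = measure UU {r<..}"
  have k0: "real k > 0" using c by auto
  have cS: "real (card ?S) > 0" using perms_fin perms_ne by (simp add: card_gt_0_iff)
  have sub: "?N \<subseteq> ?S" by auto
  have cN: "real (card ?N) * real k = real (card ?S)" by (rule perm_count[OF c])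
  have e1: "(\<Sum>\<pi>\<in>?S. A + (if \<pi> k \<noteq> c then 1 else 0) * B) = real (card ?S) * A + (\<Sum>\<pi>\<in>?S. (if \<pi> k \<noteq> c then 1 else 0 :: real)) * B"
    by (simp only: sum.distrib sum_distrib_right) simp
  have e2: "(\<Sum>\<pi>\<in>?S. (if \<pi> k \<noteq> c then 1 else 0 :: real)) = real (card {\<pi>\<in>?S. \<pi> k \<noteq> c})"
    using sum.inter_filter[OF perms_fin[of k], where g="\<lambda>_. 1::real" and P="\<lambda>\<pi>. \<pi> k \<noteq> c"] by simp
  have e3: "{\<pi>\<in>?S. \<pi> k \<noteq> c} = ?S - ?N" by blast
  have e4: "card (?S - ?N) = card ?S - card ?N"
    by (rule card_Diff_subset[OF finite_subset[OF sub perms_fin] sub])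
  have e5: "card ?N \<le> card ?S" using sub perms_fin by (rule card_mono[rotated])
  have SS: "(\<Sum>\<pi>\<in>?S. A + (if \<pi> k \<noteq> c then 1 else 0) * B) = real (card ?S) * A + B * (real (card ?S) - real (card ?N))"
    unfolding e1 e2 e3 e4 using e5 by (simp add: of_nat_diff)
  then show ?thesis
  proof -
    have N: "real (card ?N) = real (card ?S) / real k" using cN k0 by (simp add: field_simps)
    have "gcr_expect k UI (hb m r k c) = (real (card ?S) * A + B * (real (card ?S) - real (card ?N))) / real (card ?S)"
      unfolding gcr_expect_eq hb_integral A_def[symmetric] B_def[symmetric] using SS by simp
    also have "\<dots> = A + B * (1 - 1 / real k)" unfolding N using cS k0 by (simp add: field_simps)
    finally show ?thesis unfolding A_def B_def by (simp add: mult.commute)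
  qed
qed

lemma expect_sum:
  assumes fin: "finite Ed" and int: "\<And>e \<pi>. e \<in> Ed \<Longrightarrow> integrable UU (\<lambda>\<rho>. g e \<rho> \<pi>)"
  shows "gcr_expect k UI (\<lambda>\<rho> \<pi>. \<Sum>e\<in>Ed. w e * g e \<rho> \<pi>) = (\<Sum>e\<in>Ed. w e * gcr_expect k UI (g e))"
proof -
  have "\<And>\<pi>. integral\<^sup>L UU (\<lambda>\<rho>. \<Sum>e\<in>Ed. w e * g e \<rho> \<pi>) = (\<Sum>e\<in>Ed. w e * integral\<^sup>L UU (\<lambda>\<rho>. g e \<rho> \<pi>))"
    using int by (subst Bochner_Integration.integral_sum) (auto intro: integrable_mult_right)
  then have "gcr_expect k UI (\<lambda>\<rho> \<pi>. \<Sum>e\<in>Ed. w e * g e \<rho> \<pi>) =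
     (\<Sum>\<pi>\<in>{\<pi>. \<pi> permutes {1..k}}. \<Sum>e\<in>Ed. w e * integral\<^sup>L UU (\<lambda>\<rho>. g e \<rho> \<pi>)) / card {\<pi>. \<pi> permutes {1..k}}"
    unfolding gcr_expect_eq by simp
  also have "\<dots> = (\<Sum>e\<in>Ed. \<Sum>\<pi>\<in>{\<pi>. \<pi> permutes {1..k}}. w e * integral\<^sup>L UU (\<lambda>\<rho>. g e \<rho> \<pi>)) / card {\<pi>. \<pi> permutes {1..k}}"
    by (subst sum.swap) (rule refl)
  also have "\<dots> = (\<Sum>e\<in>Ed. w e * ((\<Sum>\<pi>\<in>{\<pi>. \<pi> permutes {1..k}}. integral\<^sup>L UU (\<lambda>\<rho>. g e \<rho> \<pi>)) / card {\<pi>. \<pi> permutes {1..k}}))"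
    by (simp add: sum_divide_distrib sum_distrib_left)
  also have "\<dots> = (\<Sum>e\<in>Ed. w e * gcr_expect k UI (g e))" unfolding gcr_expect_eq by simp
  finally show ?thesis .
qed



lemma sum12: "(\<Sum>i=1..2::nat. f i) = f 1 + (f 2 :: real)"
proof -
  have "{1..2::nat} = {1,2}" by auto
  then show ?thesis by simp
qed

lemma phi1_props:
  fixes s t u :: real assumes s: "0 < s" "s < 1"
  shows "0 \<le> t \<Longrightarrow> 0 \<le> min (t/s) 1" "min (t/s) 1 \<le> 1"
    and "t \<le> u \<Longrightarrow> min (t/s) 1 \<le> min (u/s) 1"
  using s by (auto simp: divide_right_mono min_def divide_le_eq)

lemma phi2_props:
  fixes s t u :: real assumes s: "0 < s" "s < 1"
  shows "0 \<le> max ((t-s)/(1-s)) 0" "t \<le> 1 \<Longrightarrow> max ((t-s)/(1-s)) 0 \<le> 1"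
    and "t \<le> u \<Longrightarrow> max ((t-s)/(1-s)) 0 \<le> max ((u-s)/(1-s)) 0"
proof -
  show "0 \<le> max ((t-s)/(1-s)) 0" by simp
  show "t \<le> 1 \<Longrightarrow> max ((t-s)/(1-s)) 0 \<le> 1" using s by (simp add: divide_le_eq)
  assume "t \<le> u"
  then have "(t-s)/(1-s) \<le> (u-s)/(1-s)" using s by (intro divide_right_mono) auto
  then show "max ((t-s)/(1-s)) 0 \<le> max ((u-s)/(1-s)) 0" by simp
qed

lemma phi_mix:
  fixes s t :: real assumes s: "0 < s" "s < 1"
  shows "s * min (t/s) 1 + (1 - s) * max ((t-s)/(1-s)) 0 = t"
proof (cases "t \<le> s")
  case True
  then have "t/s \<le> 1" using s by (simp add: divide_le_eq)
  moreover have "(t-s)/(1-s) \<le> 0" using True s by (simp add: divide_le_0_iff)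
  ultimately show ?thesis using s by (simp add: min_def max_def)
next
  case False
  then have "\<not> t/s \<le> 1" using s by (simp add: divide_le_eq)
  moreover have "(t-s)/(1-s) > 0" using False s by (intro divide_pos_pos) auto
  ultimately have e1: "min (t/s) 1 = 1" and e2: "max ((t-s)/(1-s)) 0 = (t-s)/(1-s)" by auto
  show ?thesis unfolding e1 e2 using s by (simp add: field_simps)
qed

lemma k2_integral:
  assumes H: "hypergraph_ok V Ed ed lab 2 w" and vx: "lp_vertex V Ed ed lab 2 xv xe"
    and v0: "v0 \<in> V"
  shows "xv v0 1 = 0 \<or> xv v0 1 = 1"
proof (rule ccontr)
  assume nf: "\<not> (xv v0 1 = 0 \<or> xv v0 1 = 1)"
  have F: "lp_feasible V Ed ed lab 2 xv xe" using vx unfolding lp_vertex_def by simp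
  have sumx: "\<And>u. u \<in> V \<Longrightarrow> xv u 1 + xv u 2 = 1" using F unfolding lp_feasible_def sum12 by simp
  have rng: "\<And>u i. u \<in> V \<Longrightarrow> i \<in> {1..2} \<Longrightarrow> 0 \<le> xv u i \<and> xv u i \<le> 1"
    using F unfolding lp_feasible_def by blast
  have rng1: "\<And>u. u \<in> V \<Longrightarrow> 0 \<le> xv u 1 \<and> xv u 1 \<le> 1" using rng by simp
  have erng: "\<And>e. e \<in> Ed \<Longrightarrow> 0 \<le> xe e \<and> xe e \<le> 1" using F unfolding lp_feasible_def by blast
  have econ: "\<And>e u. e \<in> Ed \<Longrightarrow> u \<in> ed e \<Longrightarrow> xv u (lab e) \<le> xe e" using F unfolding lp_feasible_def by blast
  have edV: "\<And>e. e \<in> Ed \<Longrightarrow> ed e \<subseteq> V" using H unfolding hypergraph_ok_def by blast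
  have lab12: "\<And>e. e \<in> Ed \<Longrightarrow> lab e = 1 \<or> lab e = 2" using H unfolding hypergraph_ok_def by fastforce
  define s where "s = xv v0 1"
  have s: "0 < s" "s < 1" using rng1[OF v0] nf unfolding s_def by auto
  define f1 where "f1 t = min (t/s) (1::real)" for t
  define f2 where "f2 t = max ((t-s)/(1-s)) (0::real)" for t
  note p1 = phi1_props[OF s, folded f1_def] and p2 = phi2_props[OF s, folded f2_def]
  have mix: "\<And>t. s * f1 t + (1 - s) * f2 t = t" unfolding f1_def f2_def by (rule phi_mix[OF s])
  define yv where "yv u i = (if i = 1 then f1 (xv u 1) else 1 - f1 (xv u 1))" for u and i :: nat
  define ye where "ye e = (if lab e = 1 then f1 (xe e) else 1 - f1 (1 - xe e))" for e
  define zv where "zv u i = (if i = 1 then f2 (xv u 1) else 1 - f2 (xv u 1))" for u and i :: nat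
  define ze where "ze e = (if lab e = 1 then f2 (xe e) else 1 - f2 (1 - xe e))" for e
  have Fy: "lp_feasible V Ed ed lab 2 yv ye"
    unfolding lp_feasible_def
  proof (intro conjI ballI)
    fix u assume "u \<in> V" then show "(\<Sum>i = 1..2. yv u i) = real 2 - 1" unfolding sum12 yv_def by simp
  next
    fix e u assume e: "e \<in> Ed" and u: "u \<in> ed e"
    have uV: "u \<in> V" using u edV[OF e] by blast
    show "yv u (lab e) \<le> ye e"
    proof (cases "lab e = 1")
      case True then show ?thesis unfolding yv_def ye_def using p1(3) econ[OF e u] by simp
    next
      case False
      then have l2: "lab e = 2" using lab12[OF e] by simp
      have "xv u 2 \<le> xe e" using econ[OF e u] l2 by simp
      then have "1 - xe e \<le> xv u 1" using sumx[OF uV] by simp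
      then show ?thesis unfolding yv_def ye_def using p1(3) l2 by simp
    qed
  next
    fix u i assume "u \<in> V" "i \<in> {1..2::nat}"
    then show "0 \<le> yv u i" "yv u i \<le> 1" unfolding yv_def using p1 rng1 by auto
  next
    fix e assume "e \<in> Ed"
    then show "0 \<le> ye e" "ye e \<le> 1" unfolding ye_def using p1 erng by auto
  qed
  have Fz: "lp_feasible V Ed ed lab 2 zv ze"
    unfolding lp_feasible_def
  proof (intro conjI ballI)
    fix u assume "u \<in> V" then show "(\<Sum>i = 1..2. zv u i) = real 2 - 1" unfolding sum12 zv_def by simp
  next
    fix e u assume e: "e \<in> Ed" and u: "u \<in> ed e"
    have uV: "u \<in> V" using u edV[OF e] by blast
    show "zv u (lab e) \<le> ze e"
    proof (cases "lab e = 1")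
      case True then show ?thesis unfolding zv_def ze_def using p2(3) econ[OF e u] by simp
    next
      case False
      then have l2: "lab e = 2" using lab12[OF e] by simp
      have "xv u 2 \<le> xe e" using econ[OF e u] l2 by simp
      then have "1 - xe e \<le> xv u 1" using sumx[OF uV] by simp
      then show ?thesis unfolding zv_def ze_def using p2(3) l2 by simp
    qed
  next
    fix u i assume "u \<in> V" "i \<in> {1..2::nat}"
    then show "0 \<le> zv u i" "zv u i \<le> 1" unfolding zv_def using p2 rng1 by auto
  next
    fix e assume "e \<in> Ed"
    then show "0 \<le> ze e" "ze e \<le> 1" unfolding ze_def using p2 erng by auto
  qed
  have mv: "\<forall>u\<in>V. \<forall>i\<in>{1..2}. xv u i = s * yv u i + (1 - s) * zv u i"
  proof (intro ballI)
    fix u i assume u: "u \<in> V" and i: "i \<in> {1..2::nat}"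
    show "xv u i = s * yv u i + (1 - s) * zv u i"
    proof (cases "i = 1")
      case True then show ?thesis unfolding yv_def zv_def using mix[of "xv u 1"] by simp
    next
      case False
      then have "i = 2" using i by auto
      moreover have "s * (1 - f1 (xv u 1)) + (1 - s) * (1 - f2 (xv u 1)) = 1 - xv u 1"
        using mix[of "xv u 1"] by (simp add: algebra_simps)
      ultimately show ?thesis unfolding yv_def zv_def using sumx[OF u] by simp
    qed
  qed
  have me: "\<forall>e\<in>Ed. xe e = s * ye e + (1 - s) * ze e"
  proof
    fix e assume e: "e \<in> Ed"
    show "xe e = s * ye e + (1 - s) * ze e"
    proof (cases "lab e = 1")
      case True then show ?thesis unfolding ye_def ze_def using mix[of "xe e"] by simp
    next
      case False
      have "s * (1 - f1 (1 - xe e)) + (1 - s) * (1 - f2 (1 - xe e)) = xe e"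
        using mix[of "1 - xe e"] by (simp add: algebra_simps)
      then show ?thesis unfolding ye_def ze_def using False by simp
    qed
  qed
  have "\<forall>u\<in>V. \<forall>i\<in>{1..2}. yv u i = zv u i"
    using vx Fy Fz s mv me unfolding lp_vertex_def by blast
  then have "yv v0 1 = zv v0 1" using v0 by simp
  moreover have "yv v0 1 = 1" unfolding yv_def f1_def s_def[symmetric] using s by simp
  moreover have "zv v0 1 = 0" unfolding zv_def f2_def s_def[symmetric] using s by simp
  ultimately show False by simp
qed



lemma feas_pair:
  assumes F: "lp_feasible V Ed ed lab k yv ye" and v: "v \<in> V"
    and i: "i \<in> {1..k}" and c: "c \<in> {1..k}" and ic: "i \<noteq> c"
  shows "1 \<le> yv v i + yv v c"
proof -
  have S: "(\<Sum>j=1..k. yv v j) = real k - 1" using F v unfolding lp_feasible_def by blast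
  have le1: "\<And>j. j \<in> {1..k} \<Longrightarrow> yv v j \<le> 1" using F v unfolding lp_feasible_def by blast
  have B: "{i, c} \<subseteq> {1..k}" using i c by auto
  have "(\<Sum>j=1..k. yv v j) = (\<Sum>j\<in>{1..k} - {i,c}. yv v j) + (\<Sum>j\<in>{i,c}. yv v j)"
    by (rule sum.subset_diff[OF B]) simp
  also have "(\<Sum>j\<in>{i,c}. yv v j) = yv v i + yv v c" using ic by simp
  also have "(\<Sum>j\<in>{1..k} - {i,c}. yv v j) \<le> (\<Sum>j\<in>{1..k} - {i,c}. 1)"
    by (rule sum_mono) (use le1 in auto)
  also have "(\<Sum>j\<in>{1..k} - {i,c}. 1::real) = real k - 2"
  proof -
    have "card ({1..k} - {i,c}) = card {1..k} - card {i,c}" by (rule card_Diff_subset) (use B in auto)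
    moreover have "card {i,c} = 2" using ic by simp
    moreover have "card {1..k} \<ge> 2" using card_mono[OF _ B] \<open>card {i,c} = 2\<close> by simp
    ultimately show ?thesis by (simp add: of_nat_diff)
  qed
  finally show ?thesis using S by simp
qed

definition mE :: "('v \<Rightarrow> nat \<Rightarrow> real) \<Rightarrow> ('e \<Rightarrow> 'v set) \<Rightarrow> ('e \<Rightarrow> nat) \<Rightarrow> 'e \<Rightarrow> real" where
  "mE yv ed lab e = Max ((\<lambda>v. yv v (lab e)) ` ed e)"

lemma mE_props:
  assumes H: "hypergraph_ok V Ed ed lab k w" and F: "lp_feasible V Ed ed lab k yv ye" and e: "e \<in> Ed"
  shows "\<And>v. v \<in> ed e \<Longrightarrow> yv v (lab e) \<le> mE yv ed lab e"
    and "0 \<le> mE yv ed lab e" and "mE yv ed lab e \<le> ye e"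
proof -
  have fin: "finite (ed e)" and ne: "ed e \<noteq> {}" and sub: "ed e \<subseteq> V" and c: "lab e \<in> {1..k}"
    using H e unfolding hypergraph_ok_def by (auto intro: finite_subset)
  show "\<And>v. v \<in> ed e \<Longrightarrow> yv v (lab e) \<le> mE yv ed lab e" unfolding mE_def using fin by simp
  obtain v where v: "v \<in> ed e" using ne by blast
  have "0 \<le> yv v (lab e)" using F sub v c unfolding lp_feasible_def by blast
  also have "\<dots> \<le> mE yv ed lab e" unfolding mE_def using fin v by simp
  finally show "0 \<le> mE yv ed lab e" .
  show "mE yv ed lab e \<le> ye e" unfolding mE_def using fin ne F e unfolding lp_feasible_def by auto
qed

lemma mist_hb:
  assumes H: "hypergraph_ok V Ed ed lab k w" and F: "lp_feasible V Ed ed lab k yv ye" and e: "e \<in> Ed"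
    and p: "\<pi> permutes {1..k}"
  shows "(if mistake ed lab (gcr_color k yv arb \<rho> \<pi>) e then 1 else 0)
     \<le> hb (mE yv ed lab e) (max (mE yv ed lab e) (1 - mE yv ed lab e)) k (lab e) \<rho> \<pi>"
proof (cases "mistake ed lab (gcr_color k yv arb \<rho> \<pi>) e")
  case False then show ?thesis using hb_nonneg by simp
next
  case True
  define m where "m = mE yv ed lab e"
  have c: "lab e \<in> {1..k}" and sub: "ed e \<subseteq> V" using H e unfolding hypergraph_ok_def by auto
  obtain v where v: "v \<in> ed e" and ne: "gcr_color k yv arb \<rho> \<pi> v \<noteq> lab e"
    using True unfolding mistake_def by blast
  have vm: "yv v (lab e) \<le> m" unfolding m_def using mE_props(1)[OF H F e v] .
  show ?thesis
  proof (cases "\<rho> \<le> m")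
    case True
    then have "hb m (max m (1-m)) k (lab e) \<rho> \<pi> \<ge> 1" unfolding hb_def by simp
    then show ?thesis unfolding m_def by simp
  next
    case False
    from gcr_key[OF p c ne] False vm
    obtain i where pk: "\<pi> k \<noteq> lab e" and i: "i \<in> {1..k}" "i \<noteq> lab e" "yv v i < \<rho>" by force
    have "1 \<le> yv v i + yv v (lab e)" using feas_pair[OF F _ i(1) c i(2)] v sub by blast
    then have "max m (1-m) < \<rho>" using i(3) vm False by simp
    then have "hb m (max m (1-m)) k (lab e) \<rho> \<pi> = 1" unfolding hb_def using False pk by simp
    then show ?thesis unfolding m_def by simp
  qed
qed

lemma part2:
  assumes H: "hypergraph_ok V Ed ed lab k w" and F: "lp_feasible V Ed ed lab k yv ye" and e: "e \<in> Ed"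
    and k: "3 \<le> k"
  shows "gcr_expect k UI (\<lambda>\<rho> \<pi>. if mistake ed lab (gcr_color k yv arb \<rho> \<pi>) e then 1 else 0)
      \<le> 2 * (1 - 1 / real k) * ye e"
proof -
  define m where "m = mE yv ed lab e"
  have c: "lab e \<in> {1..k}" using H e unfolding hypergraph_ok_def by auto
  have "gcr_expect k UI (\<lambda>\<rho> \<pi>. if mistake ed lab (gcr_color k yv arb \<rho> \<pi>) e then 1 else 0)
      \<le> gcr_expect k UI (hb m (max m (1-m)) k (lab e))"
    by (rule expect_mono, rule UU_int_le) (use mist_hb[OF H F e] hb_int hb_nonneg in \<open>auto simp: m_def\<close>)
  also have "\<dots> = measure UU {..m} + (1 - 1/real k) * measure UU {max m (1-m)<..}"
    by (rule expect_hb[OF c])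
  also have "\<dots> \<le> 2 * (1 - 1/real k) * m"
    by (rule AB_bound[OF _ k]) (use mE_props(2)[OF H F e] in \<open>simp add: m_def\<close>)
  also have "\<dots> \<le> 2 * (1 - 1/real k) * ye e"
  proof -
    have "0 \<le> 1 - 1/real k" using k by (simp add: field_simps)
    then show ?thesis using mE_props(3)[OF H F e] unfolding m_def by (intro mult_left_mono) auto
  qed
  finally show ?thesis .
qed



lemma hb_bound:
  assumes H: "hypergraph_ok V Ed ed lab k w" and F: "lp_feasible V Ed ed lab k yv ye" and e: "e \<in> Ed"
    and k: "3 \<le> k"
  shows "gcr_expect k UI (hb (mE yv ed lab e) (max (mE yv ed lab e) (1 - mE yv ed lab e)) k (lab e))
      \<le> 2 * (1 - 1 / real k) * ye e"
proof -
  define m where "m = mE yv ed lab e"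
  have c: "lab e \<in> {1..k}" using H e unfolding hypergraph_ok_def by auto
  have "gcr_expect k UI (hb m (max m (1-m)) k (lab e)) = measure UU {..m} + (1 - 1/real k) * measure UU {max m (1-m)<..}"
    by (rule expect_hb[OF c])
  also have "\<dots> \<le> 2 * (1 - 1/real k) * m"
    by (rule AB_bound[OF _ k]) (use mE_props(2)[OF H F e] in \<open>simp add: m_def\<close>)
  also have "\<dots> \<le> 2 * (1 - 1/real k) * ye e"
  proof -
    have "0 \<le> 1 - 1/real k" using k by (simp add: field_simps)
    then show ?thesis using mE_props(3)[OF H F e] unfolding m_def by (intro mult_left_mono) auto
  qed
  finally show ?thesis unfolding m_def .
qed

lemma sum_if_one:
  assumes "finite A" "a \<in> A"
  shows "(\<Sum>i\<in>A. if a = i then 0 else 1::real) = real (card A) - 1"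
proof -
  have "(\<Sum>i\<in>A. if a = i then 0 else 1::real) = (if a = a then 0 else 1) + (\<Sum>i\<in>A - {a}. if a = i then 0 else 1)"
    by (rule sum.remove[OF assms])
  also have "(\<Sum>i\<in>A - {a}. if a = i then 0 else 1::real) = (\<Sum>i\<in>A - {a}. 1)" by (rule sum.cong) auto
  finally have "(\<Sum>i\<in>A. if a = i then 0 else 1::real) = real (card (A - {a}))" by simp
  moreover have "card A \<noteq> 0" using assms by auto
  moreover have "card (A - {a}) = card A - 1" using assms by (simp add: card_Diff_singleton)
  ultimately show ?thesis by (simp add: of_nat_diff)
qed

lemma lp_le_opt:
  assumes H: "hypergraph_ok V Ed ed lab k w" and opt: "lp_optimal V Ed ed lab k w xv xe"
  shows "lp_obj Ed w xe \<le> ecc_opt V Ed ed lab k w"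
proof -
  have F: "lp_feasible V Ed ed lab k xv xe" using opt unfolding lp_optimal_def by simp
  have finV: "finite V" using H unfolding hypergraph_ok_def by simp
  let ?P = "V \<rightarrow>\<^sub>E {1..k}"
  have fin: "finite (ecc_cost Ed ed lab w ` ?P)" using finV by (intro finite_imageI finite_PiE) auto
  have ne: "?P \<noteq> {}"
  proof (cases "V = {}")
    case True then show ?thesis by simp
  next
    case False
    then obtain v where v: "v \<in> V" by blast
    have "(\<Sum>i=1..k. xv v i) = real k - 1" using F v unfolding lp_feasible_def by blast
    then have "k \<noteq> 0" by (cases "k = 0") auto
    then have "(\<lambda>u\<in>V. 1) \<in> ?P" by auto
    then show ?thesis by blast
  qed
  have le: "lp_obj Ed w xe \<le> ecc_cost Ed ed lab w Y" if Y: "Y \<in> ?P" for Y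
  proof -
    define yv where "yv v i = (if Y v = i then 0 else 1::real)" for v i
    define ye where "ye e = (if mistake ed lab Y e then 1 else 0::real)" for e
    have "lp_feasible V Ed ed lab k yv ye" unfolding lp_feasible_def
    proof (intro conjI ballI)
      fix v assume "v \<in> V"
      then have "Y v \<in> {1..k}" using Y by auto
      then show "(\<Sum>i = 1..k. yv v i) = real k - 1" unfolding yv_def using sum_if_one[of "{1..k}" "Y v"] by simp
    next
      fix e v assume "e \<in> Ed" "v \<in> ed e"
      then show "yv v (lab e) \<le> ye e" unfolding yv_def ye_def mistake_def by auto
    qed (auto simp: yv_def ye_def)
    then have "lp_obj Ed w xe \<le> lp_obj Ed w ye" using opt unfolding lp_optimal_def by blast
    also have "\<dots> = ecc_cost Ed ed lab w Y" unfolding lp_obj_def ecc_cost_def ye_def by simp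
    finally show ?thesis .
  qed
  show ?thesis unfolding ecc_opt_def
    by (rule Min.boundedI[OF fin]) (use ne le in auto)
qed

lemma lp_obj_nonneg:
  assumes H: "hypergraph_ok V Ed ed lab k w" and F: "lp_feasible V Ed ed lab k xv xe"
  shows "0 \<le> lp_obj Ed w xe"
  unfolding lp_obj_def using H F unfolding hypergraph_ok_def lp_feasible_def
  by (intro sum_nonneg mult_nonneg_nonneg) auto



theorem theorem2:
  fixes V :: "'v set" and Ed :: "'e set" and ed :: "'e \<Rightarrow> 'v set" and lab :: "'e \<Rightarrow> nat"
    and k :: nat and w :: "'e \<Rightarrow> real"
    and xv :: "'v \<Rightarrow> nat \<Rightarrow> real" and xe :: "'e \<Rightarrow> real"
    and arb :: "real \<Rightarrow> (nat \<Rightarrow> nat) \<Rightarrow> 'v \<Rightarrow> nat"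
  assumes H: "hypergraph_ok V Ed ed lab k w"
    and arb_col: "\<And>\<rho> \<pi> v. v \<in> V \<Longrightarrow> arb \<rho> \<pi> v \<in> {1..k}"
    and arb_meas: "\<And>\<pi> v. (\<lambda>\<rho>. arb \<rho> \<pi> v) \<in> measurable borel (count_space UNIV)"
    and opt: "lp_optimal V Ed ed lab k w xv xe"
    and vert: "k = 2 \<Longrightarrow> lp_vertex V Ed ed lab k xv xe"
  shows "(gcr_expect k {1/2<..<3/4}
           (\<lambda>\<rho> \<pi>. ecc_cost Ed ed lab w (gcr_color k xv arb \<rho> \<pi>))
         \<le> 2 * (1 - 1 / real k) * ecc_opt V Ed ed lab k w) \<and>
         (k \<ge> 3 \<longrightarrow> (\<forall>yv ye. lp_feasible V Ed ed lab k yv ye \<longrightarrow> (\<forall>e\<in>Ed.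
           gcr_expect k {1/2<..<3/4}
             (\<lambda>\<rho> \<pi>. if mistake ed lab (gcr_color k yv arb \<rho> \<pi>) e then 1 else 0)
           \<le> 2 * (1 - 1 / real k) * ye e)))"
proof (intro conjI impI allI ballI)
  fix yv ye e assume "3 \<le> k" "lp_feasible V Ed ed lab k yv ye" "e \<in> Ed"
  then show "gcr_expect k {1/2<..<3/4}
             (\<lambda>\<rho> \<pi>. if mistake ed lab (gcr_color k yv arb \<rho> \<pi>) e then 1 else 0)
           \<le> 2 * (1 - 1 / real k) * ye e" using part2[OF H] by blast
next
  have F: "lp_feasible V Ed ed lab k xv xe" using opt unfolding lp_optimal_def by simp
  have LO: "lp_obj Ed w xe \<le> ecc_opt V Ed ed lab k w" by (rule lp_le_opt[OF H opt])
  have L0: "0 \<le> lp_obj Ed w xe" by (rule lp_obj_nonneg[OF H F])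
  have finE: "finite Ed" and wnn: "\<And>e. e \<in> Ed \<Longrightarrow> 0 \<le> w e"
    and edV: "\<And>e. e \<in> Ed \<Longrightarrow> ed e \<subseteq> V" and labk: "\<And>e. e \<in> Ed \<Longrightarrow> lab e \<in> {1..k}"
    using H unfolding hypergraph_ok_def by auto
  let ?f = "\<lambda>\<rho> \<pi>. ecc_cost Ed ed lab w (gcr_color k xv arb \<rho> \<pi>)"
  consider "k = 0" | "k = 1" | "k = 2" | "3 \<le> k" by linarith
  then show "gcr_expect k {1/2<..<3/4} ?f \<le> 2 * (1 - 1 / real k) * ecc_opt V Ed ed lab k w"
  proof cases
    case 1
    then have "Ed = {}" using labk by fastforce
    then have "gcr_expect k UI ?f \<le> 0" by (intro expect_const) (auto simp: ecc_cost_def)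
    then show ?thesis using 1 LO L0 by simp
  next
    case 2
    have xv0: "xv v 1 = 0" if "v \<in> V" for v
      using F that 2 unfolding lp_feasible_def by auto
    have "?f \<rho> \<pi> \<le> 0" if p: "\<pi> permutes {1..k}" and r: "\<rho> \<in> UI" for \<rho> \<pi>
    proof -
      have "\<not> mistake ed lab (gcr_color k xv arb \<rho> \<pi>) e" if e: "e \<in> Ed" for e
      proof
        assume "mistake ed lab (gcr_color k xv arb \<rho> \<pi>) e"
        then obtain v where v: "v \<in> ed e" and ne: "gcr_color k xv arb \<rho> \<pi> v \<noteq> lab e"
          unfolding mistake_def by blast
        have l1: "lab e = 1" using labk[OF e] 2 by simp
        have "xv v 1 = 0" using xv0 v edV[OF e] by blast
        then show False using gcr_key[OF p labk[OF e] ne] r l1 2 by auto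
      qed
      then show ?thesis unfolding ecc_cost_def by simp
    qed
    then have "gcr_expect k UI ?f \<le> 0" by (intro expect_const) auto
    then show ?thesis using 2 by simp
  next
    case 3
    have VX: "lp_vertex V Ed ed lab 2 xv xe" using vert 3 by simp
    have H2: "hypergraph_ok V Ed ed lab 2 w" using H 3 by simp
    have int1: "xv v 1 = 0 \<or> xv v 1 = 1" if "v \<in> V" for v using k2_integral[OF H2 VX that] .
    have sum1: "xv v 1 + xv v 2 = 1" if "v \<in> V" for v
    proof -
      have "(\<Sum>i=1..k. xv v i) = real k - 1" using F that unfolding lp_feasible_def by blast
      then show ?thesis using 3 sum12[of "xv v"] by simp
    qed
    have "?f \<rho> \<pi> \<le> lp_obj Ed w xe" if p: "\<pi> permutes {1..k}" and r: "\<rho> \<in> UI" for \<rho> \<pi>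
    proof -
      have "(if mistake ed lab (gcr_color k xv arb \<rho> \<pi>) e then 1 else 0) \<le> xe e" if e: "e \<in> Ed" for e
      proof (cases "mistake ed lab (gcr_color k xv arb \<rho> \<pi>) e")
        case False then show ?thesis using F e unfolding lp_feasible_def by simp
      next
        case True
        then obtain v where v: "v \<in> ed e" and ne: "gcr_color k xv arb \<rho> \<pi> v \<noteq> lab e"
          unfolding mistake_def by blast
        have vV: "v \<in> V" using v edV[OF e] by blast
        have c12: "lab e = 1 \<or> lab e = 2" using labk[OF e] 3 by auto
        have "xv v (lab e) = 1"
          using gcr_key[OF p labk[OF e] ne]
        proof
          assume "\<rho> \<le> xv v (lab e)"
          then show ?thesis using r int1[OF vV] sum1[OF vV] c12 by auto
        next
          assume "\<pi> k \<noteq> lab e \<and> (\<exists>i\<in>{1..k}. i \<noteq> lab e \<and> xv v i < \<rho>)"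
          then obtain i where i: "i \<in> {1..k}" "i \<noteq> lab e" "xv v i < \<rho>" by blast
          have "i = 1 \<or> i = 2" using i(1) 3 by auto
          then show ?thesis using i r int1[OF vV] sum1[OF vV] c12 by auto
        qed
        moreover have "xv v (lab e) \<le> xe e" using F e v unfolding lp_feasible_def by blast
        ultimately show ?thesis using True by simp
      qed
      then show ?thesis unfolding ecc_cost_def lp_obj_def
        by (intro sum_mono mult_left_mono) (auto simp: wnn)
    qed
    then have "gcr_expect k UI ?f \<le> lp_obj Ed w xe" using L0 by (intro expect_const) auto
    then show ?thesis using 3 LO by simp
  next
    case 4
    define hh where "hh e = hb (mE xv ed lab e) (max (mE xv ed lab e) (1 - mE xv ed lab e)) k (lab e)" for e
    have "gcr_expect k UI ?f \<le> gcr_expect k UI (\<lambda>\<rho> \<pi>. \<Sum>e\<in>Ed. w e * hh e \<rho> \<pi>)"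
    proof (rule expect_mono, rule UU_int_le)
      fix \<pi> \<rho> assume p: "\<pi> permutes {1..k}"
      show "?f \<rho> \<pi> \<le> (\<Sum>e\<in>Ed. w e * hh e \<rho> \<pi>)"
        unfolding ecc_cost_def hh_def
        by (intro sum_mono mult_left_mono mist_hb[OF H F _ p]) (auto simp: wnn)
      show "integrable UU (\<lambda>\<rho>. \<Sum>e\<in>Ed. w e * hh e \<rho> \<pi>)"
        unfolding hh_def by (intro Bochner_Integration.integrable_sum integrable_mult_right hb_int)
      show "0 \<le> (\<Sum>e\<in>Ed. w e * hh e \<rho> \<pi>)"
        unfolding hh_def by (intro sum_nonneg mult_nonneg_nonneg hb_nonneg) (auto simp: wnn)
    qed
    also have "\<dots> = (\<Sum>e\<in>Ed. w e * gcr_expect k UI (hh e))"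
      by (rule expect_sum[OF finE]) (simp add: hh_def hb_int)
    also have "\<dots> \<le> (\<Sum>e\<in>Ed. w e * (2 * (1 - 1 / real k) * xe e))"
      unfolding hh_def by (intro sum_mono mult_left_mono hb_bound[OF H F _ 4]) (auto simp: wnn)
    also have "\<dots> = 2 * (1 - 1 / real k) * lp_obj Ed w xe"
      unfolding lp_obj_def by (simp add: sum_distrib_left mult.left_commute)
    also have "\<dots> \<le> 2 * (1 - 1 / real k) * ecc_opt V Ed ed lab k w"
    proof -
      have "0 \<le> 1 - 1/real k" using 4 by (simp add: field_simps)
      then show ?thesis using LO by (intro mult_left_mono) auto
    qed
    finally show ?thesis .
  qed
qed

end
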